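(* Let $Q$ be a Moufang loop with trivial nucleus. Then there exists a unique automorphism $\sigma$ of the multiplication group $\mathrm{Mlt}(Q)$ such that $\sigma(L_x)=R_x$ and $\sigma(R_x)=M_x^{-1}$ for every $x\in Q$, where $M_x=R_xL_x$. This automorphism satisfies $\sigma^3=\mathrm{id}_{\mathrm{Mlt}(Q)}$, and if $\varphi\in\mathrm{Inn}(Q)$ and $c\in Q$ is a companion of $\varphi$ (i.e. $c\varphi(x)\cdot\varphi(y)=c\varphi(xy)$ for all $x,y\in Q$), then $\sigma(\varphi)=R_c^{-1}\varphi$.
   Context: A loop is a magma with identity $1$ in which the left translations $L_x(y)=xy$ and right translations $R_x(y)=yx$ are bijections; it is Moufang if it satisfies $xy\cdot zx=(x\cdot yz)x$. The multiplication group $\mathrm{Mlt}(Q)$ is the permutation group generated by all $L_x,R_x$; the inner mapping group $\mathrm{Inn}(Q)$ is the stabilizer of $1$ in $\mathrm{Mlt}(Q)$. The nucleus is the set of $x$ with $x(yz)=(xy)z$, $y(xz)=(yx)z$, $y(zx)=(yz)x$ for all $y,z$. In a Moufang loop every inner mapping $\varphi$ is a pseudoautomorphism, i.e. has at least one companion $c$ with $c\varphi(x)\cdot\varphi(y)=c\varphi(xy)$ for all $x,y$. *)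

theory Defs
  imports "HOL-Algebra.Algebra"
begin

definition loop :: "'a set \<Rightarrow> ('a \<Rightarrow> 'a \<Rightarrow> 'a) \<Rightarrow> 'a \<Rightarrow> bool" where
  "loop Q m e \<longleftrightarrow> e \<in> Q \<and> (\<forall>x\<in>Q. \<forall>y\<in>Q. m x y \<in> Q)
     \<and> (\<forall>x\<in>Q. m e x = x \<and> m x e = x)
     \<and> (\<forall>x\<in>Q. bij_betw (\<lambda>y. m x y) Q Q \<and> bij_betw (\<lambda>y. m y x) Q Q)"

definition moufang_loop :: "'a set \<Rightarrow> ('a \<Rightarrow> 'a \<Rightarrow> 'a) \<Rightarrow> 'a \<Rightarrow> bool" where
  "moufang_loop Q m e \<longleftrightarrow> loop Q m e \<and>
     (\<forall>x\<in>Q. \<forall>y\<in>Q. \<forall>z\<in>Q. m (m x y) (m z x) = m (m x (m y z)) x)"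

definition nucleus :: "'a set \<Rightarrow> ('a \<Rightarrow> 'a \<Rightarrow> 'a) \<Rightarrow> 'a set" where
  "nucleus Q m = {x\<in>Q. \<forall>y\<in>Q. \<forall>z\<in>Q.
      m x (m y z) = m (m x y) z \<and> m y (m x z) = m (m y x) z \<and> m y (m z x) = m (m y z) x}"

definition Lt :: "'a set \<Rightarrow> ('a \<Rightarrow> 'a \<Rightarrow> 'a) \<Rightarrow> 'a \<Rightarrow> ('a \<Rightarrow> 'a)" where
  "Lt Q m x = (\<lambda>y\<in>Q. m x y)"

definition Rt :: "'a set \<Rightarrow> ('a \<Rightarrow> 'a \<Rightarrow> 'a) \<Rightarrow> 'a \<Rightarrow> ('a \<Rightarrow> 'a)" where
  "Rt Q m x = (\<lambda>y\<in>Q. m y x)"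

text \<open>Multiplication group: subgroup of the symmetric group on Q generated by all translations;
  the group operation is composition (g \<otimes> f = g \<circ> f).\<close>

definition Mlt :: "'a set \<Rightarrow> ('a \<Rightarrow> 'a \<Rightarrow> 'a) \<Rightarrow> ('a \<Rightarrow> 'a) monoid" where
  "Mlt Q m = (BijGroup Q)\<lparr>carrier :=
      generate (BijGroup Q) ((Lt Q m ` Q) \<union> (Rt Q m ` Q))\<rparr>"

definition Inn :: "'a set \<Rightarrow> ('a \<Rightarrow> 'a \<Rightarrow> 'a) \<Rightarrow> 'a \<Rightarrow> ('a \<Rightarrow> 'a) set" where
  "Inn Q m e = {f \<in> carrier (Mlt Q m). f e = e}"

definition companion :: "'a set \<Rightarrow> ('a \<Rightarrow> 'a \<Rightarrow> 'a) \<Rightarrow> ('a \<Rightarrow> 'a) \<Rightarrow> 'a \<Rightarrow> bool" where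
  "companion Q m \<phi> c \<longleftrightarrow> c \<in> Q \<and>
     (\<forall>x\<in>Q. \<forall>y\<in>Q. m (m c (\<phi> x)) (\<phi> y) = m c (\<phi> (m x y)))"

end

theory Submission imports Defs begin

locale mouf =
  fixes Q :: "'a set" and m :: "'a \<Rightarrow> 'a \<Rightarrow> 'a" and e :: 'a
  assumes ml: "moufang_loop Q m e"
begin

lemma cl[simp,intro]: "x \<in> Q \<Longrightarrow> y \<in> Q \<Longrightarrow> m x y \<in> Q"
  using ml by (auto simp: moufang_loop_def loop_def)
lemma e_in[simp,intro]: "e \<in> Q" using ml by (auto simp: moufang_loop_def loop_def)
lemma el[simp]: "x \<in> Q \<Longrightarrow> m e x = x" using ml by (auto simp: moufang_loop_def loop_def)
lemma er[simp]: "x \<in> Q \<Longrightarrow> m x e = x" using ml by (auto simp: moufang_loop_def loop_def)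
lemma bl: "x \<in> Q \<Longrightarrow> bij_betw (\<lambda>y. m x y) Q Q" using ml by (auto simp: moufang_loop_def loop_def)
lemma br: "x \<in> Q \<Longrightarrow> bij_betw (\<lambda>y. m y x) Q Q" using ml by (auto simp: moufang_loop_def loop_def)
lemma mo: "x \<in> Q \<Longrightarrow> y \<in> Q \<Longrightarrow> z \<in> Q \<Longrightarrow> m (m x y) (m z x) = m (m x (m y z)) x"
  using ml by (auto simp: moufang_loop_def)

lemma lcan: "x \<in> Q \<Longrightarrow> y \<in> Q \<Longrightarrow> z \<in> Q \<Longrightarrow> m x y = m x z \<Longrightarrow> y = z"
  using bl[of x] by (auto simp: bij_betw_def inj_on_def)
lemma rcan: "x \<in> Q \<Longrightarrow> y \<in> Q \<Longrightarrow> z \<in> Q \<Longrightarrow> m y x = m z x \<Longrightarrow> y = z"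
  using br[of x] by (auto simp: bij_betw_def inj_on_def)

lemma flex: "x \<in> Q \<Longrightarrow> z \<in> Q \<Longrightarrow> m x (m z x) = m (m x z) x"
  using mo[of x e z] by simp

definition iv :: "'a \<Rightarrow> 'a" where "iv x = (THE y. y \<in> Q \<and> m x y = e)"

lemma iv_ex: assumes "x \<in> Q" shows "iv x \<in> Q \<and> m x (iv x) = e"
proof -
  obtain y where y: "y \<in> Q" "m x y = e" using bl[OF assms] e_in
    by (metis (no_types, lifting) bij_betw_iff_bijections)
  have "\<exists>!y. y \<in> Q \<and> m x y = e" using y lcan[OF assms] by metis
  then show ?thesis unfolding iv_def by (rule theI')
qed

lemma iv_in[simp,intro]: "x \<in> Q \<Longrightarrow> iv x \<in> Q" using iv_ex by blast
lemma rinv[simp]: "x \<in> Q \<Longrightarrow> m x (iv x) = e" using iv_ex by blast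

lemma lip1[simp]: assumes "x \<in> Q" "z \<in> Q" shows "m x (m (iv x) z) = z"
proof -
  have "m (m x (iv x)) (m z x) = m (m x (m (iv x) z)) x" using mo[of x "iv x" z] assms by simp
  then have "m z x = m (m x (m (iv x) z)) x" using assms by simp
  then show ?thesis using rcan assms by (metis cl iv_in)
qed

lemma lip2[simp]: assumes "x \<in> Q" "z \<in> Q" shows "m (iv x) (m x z) = z"
  using lip1[of x "m (iv x) (m x z)"] lip1[of x "m x z"] assms lcan[of x]
  by (metis cl iv_in lip1)

lemma linv[simp]: "x \<in> Q \<Longrightarrow> m (iv x) x = e" using lip2[of x e] by simp

lemma mo2: "x \<in> Q \<Longrightarrow> y \<in> Q \<Longrightarrow> z \<in> Q \<Longrightarrow> m (m x y) (m z x) = m x (m (m y z) x)"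
  using mo flex by simp

lemma rip1[simp]: assumes "x \<in> Q" "y \<in> Q" shows "m (m y (iv x)) x = y"
proof -
  have "m (m x y) (m (iv x) x) = m x (m (m y (iv x)) x)" using mo2[of x y "iv x"] assms by simp
  then show ?thesis using assms lcan[of x y "m (m y (iv x)) x"] by simp
qed

lemma rip2[simp]: assumes "x \<in> Q" "y \<in> Q" shows "m (m y x) (iv x) = y"
  using rip1[of x "m (m y x) (iv x)"] assms rcan[of x "m (m y x) (iv x)" y]
  by (metis cl iv_in rip1)

lemma iviv[simp]: "x \<in> Q \<Longrightarrow> iv (iv x) = x"
  using lcan[of "iv x" "iv (iv x)" x] by simp

lemma iv_mult: assumes "x \<in> Q" "y \<in> Q" shows "iv (m x y) = m (iv y) (iv x)"
proof -
  have "m (iv (m x y)) x = iv y"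
    using lip2[of "m x y" "iv y"] rip2[of y x] assms by (metis cl iv_in)
  then have "m (m (iv (m x y)) x) (iv x) = m (iv y) (iv x)" by simp
  then show ?thesis using assms by simp
qed

lemma iv_inj: "x \<in> Q \<Longrightarrow> y \<in> Q \<Longrightarrow> iv x = iv y \<Longrightarrow> x = y"
  by (metis iviv)


definition J :: "'a \<Rightarrow> 'a" where "J = restrict iv Q"
definition ivf :: "('a \<Rightarrow> 'a) \<Rightarrow> ('a \<Rightarrow> 'a)" where "ivf f = restrict (inv_into Q f) Q"
definition atp :: "(('a \<Rightarrow> 'a) \<times> ('a \<Rightarrow> 'a) \<times> ('a \<Rightarrow> 'a)) set" where
  "atp = {(a,b,c). a \<in> Bij Q \<and> b \<in> Bij Q \<and> c \<in> Bij Q \<and> (\<forall>y\<in>Q. \<forall>z\<in>Q. m (a y) (b z) = c (m y z))}"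
definition cj :: "('a \<Rightarrow> 'a) \<Rightarrow> ('a \<Rightarrow> 'a)" where "cj f = compose Q J (compose Q f J)"

lemma Bij_app[simp,intro]: "f \<in> Bij Q \<Longrightarrow> x \<in> Q \<Longrightarrow> f x \<in> Q"
  using Bij_imp_funcset by blast

lemma J_Bij: "J \<in> Bij Q"
proof -
  have "bij_betw iv Q Q" by (rule bij_betw_byWitness[where f'=iv]) auto
  then show ?thesis unfolding Bij_def J_def by (simp add: bij_betw_def inj_on_def)
qed

lemma cj_Bij: "f \<in> Bij Q \<Longrightarrow> cj f \<in> Bij Q"
  unfolding cj_def using J_Bij compose_Bij by blast

lemma cj_app[simp]: "f \<in> Bij Q \<Longrightarrow> x \<in> Q \<Longrightarrow> cj f x = iv (f (iv x))"
  unfolding cj_def J_def compose_def by auto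

lemma cj_cj: assumes "f \<in> Bij Q" shows "cj (cj f) = f"
proof (rule extensionalityI[where A=Q])
  show "cj (cj f) \<in> extensional Q" unfolding cj_def compose_def by simp
  show "f \<in> extensional Q" using assms Bij_imp_extensional by blast
  fix x assume "x \<in> Q" then show "cj (cj f) x = f x" using assms cj_Bij by simp
qed

lemma atpD: "(a,b,c) \<in> atp \<Longrightarrow> y \<in> Q \<Longrightarrow> z \<in> Q \<Longrightarrow> m (a y) (b z) = c (m y z)"
  unfolding atp_def by blast
lemma atpB: "(a,b,c) \<in> atp \<Longrightarrow> a \<in> Bij Q \<and> b \<in> Bij Q \<and> c \<in> Bij Q"
  unfolding atp_def by blast

lemma atp_T: assumes "(a,b,c) \<in> atp" shows "(b, cj c, cj a) \<in> atp"
proof -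
  have B: "a \<in> Bij Q" "b \<in> Bij Q" "c \<in> Bij Q" using atpB[OF assms] by auto
  have "m (b y) (iv (c (iv z))) = iv (a (iv (m y z)))" if "y \<in> Q" "z \<in> Q" for y z
  proof -
    have py: "m (iv (m y z)) y = iv z" using that by (simp add: iv_mult)
    have "m (a (iv (m y z))) (b y) = c (iv z)" using atpD[OF assms, of "iv (m y z)" y] that py by simp
    then have "b y = m (iv (a (iv (m y z)))) (c (iv z))"
      using lip2[of "a (iv (m y z))" "b y"] that B by simp
    then show ?thesis using that B by simp
  qed
  then show ?thesis using B cj_Bij unfolding atp_def by auto
qed

lemma atp_comp: assumes "(a,b,c) \<in> atp" "(a',b',c') \<in> atp"
  shows "(compose Q a a', compose Q b b', compose Q c c') \<in> atp"
proof -
  have B: "compose Q a a' \<in> Bij Q" "compose Q b b' \<in> Bij Q" "compose Q c c' \<in> Bij Q"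
    using atpB[OF assms(1)] atpB[OF assms(2)] compose_Bij by blast+
  have "m (compose Q a a' y) (compose Q b b' z) = compose Q c c' (m y z)" if "y \<in> Q" "z \<in> Q" for y z
    using atpB[OF assms(1)] atpB[OF assms(2)] atpD[OF assms(1)] atpD[OF assms(2)] that
    by (simp add: compose_def)
  then show ?thesis using B unfolding atp_def by blast
qed

lemma Bij_ivf: "f \<in> Bij Q \<Longrightarrow> ivf f \<in> Bij Q"
  unfolding ivf_def by (rule restrict_inv_into_Bij)

lemma Bij_ff: "f \<in> Bij Q \<Longrightarrow> x \<in> Q \<Longrightarrow> f (ivf f x) = x"
  unfolding ivf_def Bij_def by (auto simp: bij_betw_def f_inv_into_f)
lemma Bij_ff2: "f \<in> Bij Q \<Longrightarrow> x \<in> Q \<Longrightarrow> ivf f (f x) = x"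
  unfolding ivf_def Bij_def using Bij_app[of f x] by (auto simp: bij_betw_def Bij_def)
lemma Bij_ivf_app[simp,intro]: "f \<in> Bij Q \<Longrightarrow> x \<in> Q \<Longrightarrow> ivf f x \<in> Q"
  using Bij_ivf Bij_app by blast

lemma atp_inv: assumes "(a,b,c) \<in> atp" shows "(ivf a, ivf b, ivf c) \<in> atp"
proof -
  have B: "a \<in> Bij Q" "b \<in> Bij Q" "c \<in> Bij Q" using atpB[OF assms] by auto
  have "m (ivf a y) (ivf b z) = ivf c (m y z)" if "y \<in> Q" "z \<in> Q" for y z
  proof -
    have "c (m (ivf a y) (ivf b z)) = m y z"
      using atpD[OF assms, of "ivf a y" "ivf b z"] that B by (simp add: Bij_ff)
    then show ?thesis using Bij_ff2[of c "m (ivf a y) (ivf b z)"] B that by simp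
  qed
  then show ?thesis using B Bij_ivf unfolding atp_def by auto
qed

lemma atp_id: "(\<lambda>x\<in>Q. x, \<lambda>x\<in>Q. x, \<lambda>x\<in>Q. x) \<in> atp"
  unfolding atp_def using id_Bij by auto

lemma Lt_Bij: "x \<in> Q \<Longrightarrow> Lt Q m x \<in> Bij Q"
  unfolding Lt_def Bij_def using bl[of x] by (simp add: bij_betw_def inj_on_def)
lemma Rt_Bij: "x \<in> Q \<Longrightarrow> Rt Q m x \<in> Bij Q"
  unfolding Rt_def Bij_def using br[of x] by (simp add: bij_betw_def inj_on_def)

lemma atp_LR: "x \<in> Q \<Longrightarrow> (Lt Q m x, Rt Q m x, compose Q (Rt Q m x) (Lt Q m x)) \<in> atp"
proof -
  assume x: "x \<in> Q"
  have B: "compose Q (Rt Q m x) (Lt Q m x) \<in> Bij Q" using x Lt_Bij Rt_Bij compose_Bij by blast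
  show ?thesis unfolding atp_def using B Lt_Bij[OF x] Rt_Bij[OF x] x
    by (auto simp: Lt_def Rt_def compose_def mo)
qed

lemma cj_L: "x \<in> Q \<Longrightarrow> cj (compose Q (Rt Q m x) (Lt Q m x)) = ivf (compose Q (Rt Q m x) (Lt Q m x))"
proof -
  assume x: "x \<in> Q"
  let ?M = "compose Q (Rt Q m x) (Lt Q m x)"
  have MB: "?M \<in> Bij Q" using x Lt_Bij Rt_Bij compose_Bij by blast
  show ?thesis
  proof (rule extensionalityI[where A=Q])
    show "cj ?M \<in> extensional Q" using cj_Bij MB Bij_imp_extensional by blast
    show "ivf ?M \<in> extensional Q" using Bij_ivf MB Bij_imp_extensional by blast
    fix q assume q: "q \<in> Q"
    have "?M (cj ?M q) = q" using q x MB
      by (simp add: Lt_def Rt_def compose_def iv_mult)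
    then have "ivf ?M (?M (cj ?M q)) = ivf ?M q" by simp
    then show "cj ?M q = ivf ?M q" using Bij_ff2[OF MB] q cj_Bij[OF MB] by simp
  qed
qed

end

locale moufn = mouf +
  assumes nuc: "nucleus Q m = {e}"
begin

lemma kernel: assumes "(\<lambda>x\<in>Q. x, b, c) \<in> atp" shows "b = (\<lambda>x\<in>Q. x)"
proof -
  have B: "b \<in> Bij Q" "c \<in> Bij Q" using atpB[OF assms] by auto
  define a where "a = b e"
  have aQ: "a \<in> Q" using B a_def by auto
  have bc: "b z = c z" if "z \<in> Q" for z using atpD[OF assms, of e z] that B by simp
  have cr: "c y = m y a" if "y \<in> Q" for y using atpD[OF assms, of y e] that a_def by simp
  have br: "b z = m z a" if "z \<in> Q" for z using bc cr that by simp
  have R: "m y (m z a) = m (m y z) a" if "y \<in> Q" "z \<in> Q" for y z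
    using atpD[OF assms, of y z] that br cr by simp
  have R': "m y (m z (iv a)) = m (m y z) (iv a)" if "y \<in> Q" "z \<in> Q" for y z
  proof -
    have "m y (m (m z (iv a)) a) = m (m y (m z (iv a))) a" using R[of y "m z (iv a)"] that aQ by simp
    then have "m y z = m (m y (m z (iv a))) a" using that aQ by simp
    then show ?thesis using that aQ by (metis cl iv_in rip2)
  qed
  have L: "m a (m y z) = m (m a y) z" if "y \<in> Q" "z \<in> Q" for y z
  proof -
    have "iv (m a (m y z)) = iv (m (m a y) z)"
      using that aQ R'[of "iv z" "iv y"] by (simp add: iv_mult)
    then show ?thesis using iv_inj that aQ by simp
  qed
  have Ra: "(\<lambda>x\<in>Q. x, Rt Q m a, Rt Q m a) \<in> atp"
    unfolding atp_def using id_Bij Rt_Bij[OF aQ] R by (auto simp: Rt_def)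
  from atp_T[OF this] have T1: "(Rt Q m a, cj (Rt Q m a), cj (\<lambda>x\<in>Q. x)) \<in> atp" .
  have Mi: "m y (m a z) = m (m y a) z" if "y \<in> Q" "z \<in> Q" for y z
  proof -
    have "m (Rt Q m a y) (cj (Rt Q m a) (m a z)) = cj (\<lambda>x\<in>Q. x) (m y (m a z))"
      using atpD[OF T1, of y "m a z"] that aQ by simp
    then show ?thesis using that aQ id_Bij[of Q] Rt_Bij[OF aQ] cj_app[OF id_Bij[of Q], of "m y (m a z)"] by (simp add: Rt_def iv_mult)
  qed
  have "a \<in> nucleus Q m" unfolding nucleus_def using aQ L Mi R by auto
  then have "a = e" using nuc by auto
  then show ?thesis using br Bij_imp_extensional[OF B(1)]
    by (intro extensionalityI[where A=Q]) auto
qed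


abbreviation G where "G \<equiv> BijGroup Q"
abbreviation gens where "gens \<equiv> Lt Q m ` Q \<union> Rt Q m ` Q"
abbreviation HH where "HH \<equiv> generate G gens"

lemma gens_sub: "gens \<subseteq> carrier G"
  using Lt_Bij Rt_Bij by (auto simp: BijGroup_def)

lemma grpG: "group G" by (rule group_BijGroup)

lemma sub: "subgroup HH G"
  by (rule group.generate_is_subgroup[OF grpG gens_sub])

lemma HB: "g \<in> HH \<Longrightarrow> g \<in> Bij Q"
  using subgroup.subset[OF sub] by (auto simp: BijGroup_def)

lemma multG: "f \<in> Bij Q \<Longrightarrow> g \<in> Bij Q \<Longrightarrow> f \<otimes>\<^bsub>G\<^esub> g = compose Q f g"
  by (simp add: BijGroup_def)

lemma invG: "f \<in> Bij Q \<Longrightarrow> inv\<^bsub>G\<^esub> f = ivf f"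
  by (simp add: inv_BijGroup ivf_def)

lemma oneG: "\<one>\<^bsub>G\<^esub> = (\<lambda>x\<in>Q. x)" by (simp add: BijGroup_def)

lemma uniq: assumes "(g,h,c) \<in> atp" "(g,h',c') \<in> atp" shows "h' = h"
proof -
  have B: "g \<in> Bij Q" "h \<in> Bij Q" "h' \<in> Bij Q" using atpB assms by blast+
  have "(compose Q (ivf g) g, compose Q (ivf h) h', compose Q (ivf c) c') \<in> atp"
    using atp_comp[OF atp_inv[OF assms(1)] assms(2)] .
  moreover have "compose Q (ivf g) g = (\<lambda>x\<in>Q. x)"
    using Bij_compose_restrict_eq[OF B(1)] by (simp add: ivf_def)
  ultimately have "compose Q (ivf h) h' = (\<lambda>x\<in>Q. x)" using kernel by auto
  then have "inv\<^bsub>G\<^esub> h \<otimes>\<^bsub>G\<^esub> h' = \<one>\<^bsub>G\<^esub>"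
    using B by (simp add: multG invG Bij_ivf oneG)
  then have "inv\<^bsub>G\<^esub> h' = inv\<^bsub>G\<^esub> h"
    using group.inv_equality[OF grpG] B group.inv_closed[OF grpG] by (simp add: BijGroup_def)
  then show ?thesis using group.inv_inv[OF grpG] B by (metis BijGroup_def partial_object.select_convs(1))
qed

lemma Mdef: "x \<in> Q \<Longrightarrow> Rt Q m x \<otimes>\<^bsub>G\<^esub> Lt Q m x = compose Q (Rt Q m x) (Lt Q m x)"
  using Lt_Bij Rt_Bij multG by blast

lemma sigR: "x \<in> Q \<Longrightarrow> (Rt Q m x, inv\<^bsub>G\<^esub> (Rt Q m x \<otimes>\<^bsub>G\<^esub> Lt Q m x), cj (Lt Q m x)) \<in> atp"
  using atp_T[OF atp_LR] cj_L Mdef invG Lt_Bij Rt_Bij compose_Bij by metis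

lemma gen_ex: "g \<in> gens \<Longrightarrow> \<exists>h c. (g,h,c) \<in> atp \<and> h \<in> HH"
proof -
  assume "g \<in> gens"
  then consider x where "x \<in> Q" "g = Lt Q m x" | x where "x \<in> Q" "g = Rt Q m x" by blast
  then show ?thesis
  proof cases
    case 1 then show ?thesis using atp_LR generate.incl[of "Rt Q m x" gens G] by blast
  next
    case 2
    have "Rt Q m x \<otimes>\<^bsub>G\<^esub> Lt Q m x \<in> HH"
      using 2 generate.eng generate.incl by (metis UnCI image_eqI)
    then have "inv\<^bsub>G\<^esub> (Rt Q m x \<otimes>\<^bsub>G\<^esub> Lt Q m x) \<in> HH"
      using subgroup.m_inv_closed[OF sub] by blast
    then show ?thesis using 2 sigR by blast
  qed
qed

lemma H_ex: "g \<in> HH \<Longrightarrow> \<exists>h c. (g,h,c) \<in> atp \<and> h \<in> HH"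
proof (induction rule: generate.induct)
  case one
  then show ?case using atp_id oneG generate.one[of G gens] by metis
next
  case (incl h) then show ?case using gen_ex by blast
next
  case (inv g)
  then obtain h c where hc: "(g,h,c) \<in> atp" "h \<in> HH" using gen_ex by blast
  have "(ivf g, ivf h, ivf c) \<in> atp" using atp_inv[OF hc(1)] .
  moreover have "ivf h \<in> HH" using subgroup.m_inv_closed[OF sub hc(2)] invG HB hc(2) by metis
  moreover have "inv\<^bsub>G\<^esub> g = ivf g" using invG inv(1) gens_sub by (auto simp: BijGroup_def)
  ultimately show ?case by metis
next
  case (eng g1 g2)
  then obtain h1 c1 h2 c2 where hc: "(g1,h1,c1) \<in> atp" "h1 \<in> HH" "(g2,h2,c2) \<in> atp" "h2 \<in> HH" by blast
  have "(compose Q g1 g2, compose Q h1 h2, compose Q c1 c2) \<in> atp" using atp_comp hc by blast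
  moreover have "compose Q h1 h2 \<in> HH" using generate.eng[OF hc(2) hc(4)] multG HB hc by metis
  moreover have "g1 \<otimes>\<^bsub>G\<^esub> g2 = compose Q g1 g2" using multG HB eng by blast
  ultimately show ?case by metis
qed

definition sig where "sig = (\<lambda>g\<in>HH. THE h. \<exists>c. (g,h,c) \<in> atp)"

lemma sig_eq: assumes "g \<in> HH" "(g,h,c) \<in> atp" shows "sig g = h"
proof -
  have "\<exists>!h. \<exists>c. (g,h,c) \<in> atp" using assms uniq by blast
  then have "\<exists>c. (g, THE h. \<exists>c. (g,h,c) \<in> atp, c) \<in> atp" by (rule theI')
  then show ?thesis using assms uniq unfolding sig_def by auto
qed

lemma sig_prop: assumes "g \<in> HH" shows "(\<exists>c. (g, sig g, c) \<in> atp) \<and> sig g \<in> HH"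
  using H_ex[OF assms] sig_eq[OF assms] by blast


abbreviation MM where "MM \<equiv> Mlt Q m"
lemma carM[simp]: "carrier MM = HH" by (simp add: Mlt_def)
lemma mulM[simp]: "x \<otimes>\<^bsub>MM\<^esub> y = x \<otimes>\<^bsub>G\<^esub> y" by (simp add: Mlt_def)
lemma oneM[simp]: "\<one>\<^bsub>MM\<^esub> = \<one>\<^bsub>G\<^esub>" by (simp add: Mlt_def)
lemma invM: "x \<in> HH \<Longrightarrow> inv\<^bsub>MM\<^esub> x = inv\<^bsub>G\<^esub> x"
  unfolding Mlt_def using group.m_inv_consistent[OF grpG sub] by blast
lemma grpM: "group MM" unfolding Mlt_def using subgroup.subgroup_is_group[OF sub grpG] .

lemma sig3: assumes "g \<in> HH" shows "sig (sig (sig g)) = g"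
proof -
  obtain c where c: "(g, sig g, c) \<in> atp" and s1: "sig g \<in> HH" using sig_prop[OF assms] by blast
  have t1: "(sig g, cj c, cj g) \<in> atp" using atp_T[OF c] .
  then have e1: "sig (sig g) = cj c" using sig_eq s1 by blast
  have s2: "sig (sig g) \<in> HH" using sig_prop s1 by blast
  have t2: "(cj c, cj (cj g), cj (sig g)) \<in> atp" using atp_T[OF t1] .
  then have "sig (sig (sig g)) = cj (cj g)" using sig_eq s2 e1 by metis
  then show ?thesis using cj_cj HB assms by simp
qed

lemma sig_hom: assumes "g1 \<in> HH" "g2 \<in> HH" shows "sig (g1 \<otimes>\<^bsub>G\<^esub> g2) = sig g1 \<otimes>\<^bsub>G\<^esub> sig g2"
proof -
  obtain c1 where c1: "(g1, sig g1, c1) \<in> atp" "sig g1 \<in> HH" using sig_prop[OF assms(1)] by blast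
  obtain c2 where c2: "(g2, sig g2, c2) \<in> atp" "sig g2 \<in> HH" using sig_prop[OF assms(2)] by blast
  have "(compose Q g1 g2, compose Q (sig g1) (sig g2), compose Q c1 c2) \<in> atp"
    using atp_comp c1 c2 by blast
  moreover have "g1 \<otimes>\<^bsub>G\<^esub> g2 \<in> HH" using generate.eng[OF assms] .
  ultimately show ?thesis using sig_eq multG HB assms c1 c2 by metis
qed

lemma sig_auto: "sig \<in> auto MM"
proof -
  have into: "sig \<in> HH \<rightarrow> HH" using sig_prop by blast
  have "sig \<in> hom MM MM" unfolding hom_def using into sig_hom carM mulM by auto
  moreover have "bij_betw sig HH HH"
  proof (rule bij_betw_byWitness[where f'="\<lambda>g. sig (sig g)"])
    show "\<forall>a\<in>HH. sig (sig (sig a)) = a" using sig3 by blast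
    show "\<forall>a'\<in>HH. sig (sig (sig a')) = a'" using sig3 by blast
    show "sig ` HH \<subseteq> HH" using into by blast
    show "(\<lambda>g. sig (sig g)) ` HH \<subseteq> HH" using into by blast
  qed
  moreover have "sig \<in> extensional HH" unfolding sig_def by simp
  ultimately show ?thesis unfolding auto_def Bij_def by simp
qed

lemma LH: "x \<in> Q \<Longrightarrow> Lt Q m x \<in> HH" by (simp add: generate.incl)
lemma RH: "x \<in> Q \<Longrightarrow> Rt Q m x \<in> HH" by (simp add: generate.incl)

lemma sig_L: "x \<in> Q \<Longrightarrow> sig (Lt Q m x) = Rt Q m x"
  using sig_eq[OF LH atp_LR] .

lemma sig_R: "x \<in> Q \<Longrightarrow> sig (Rt Q m x) = inv\<^bsub>MM\<^esub> (Rt Q m x \<otimes>\<^bsub>MM\<^esub> Lt Q m x)"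
proof -
  assume x: "x \<in> Q"
  have "Rt Q m x \<otimes>\<^bsub>G\<^esub> Lt Q m x \<in> HH" using generate.eng[OF RH[OF x] LH[OF x]] .
  then have "inv\<^bsub>MM\<^esub> (Rt Q m x \<otimes>\<^bsub>MM\<^esub> Lt Q m x) = inv\<^bsub>G\<^esub> (Rt Q m x \<otimes>\<^bsub>G\<^esub> Lt Q m x)"
    using invM mulM by metis
  then show ?thesis using sig_eq[OF RH[OF x] sigR[OF x]] by metis
qed

lemma sig_unique: assumes "\<tau> \<in> auto MM"
  and "\<forall>x\<in>Q. \<tau> (Lt Q m x) = Rt Q m x \<and> \<tau> (Rt Q m x) = inv\<^bsub>MM\<^esub> (Rt Q m x \<otimes>\<^bsub>MM\<^esub> Lt Q m x)"
  shows "\<tau> = sig"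
proof -
  have th: "\<tau> \<in> hom MM MM" using assms(1) by (simp add: auto_def)
  have sh: "sig \<in> hom MM MM" using sig_auto by (simp add: auto_def)
  have gT: "group_hom MM MM \<tau>" using th grpM unfolding group_hom_def group_hom_axioms_def by blast
  have gS: "group_hom MM MM sig" using sh grpM unfolding group_hom_def group_hom_axioms_def by blast
  have gen: "\<tau> g = sig g" if "g \<in> gens" for g
  proof -
    from that consider x where "x \<in> Q" "g = Lt Q m x" | x where "x \<in> Q" "g = Rt Q m x" by blast
    then show ?thesis
    proof cases
      case 1 then show ?thesis using assms(2) sig_L by metis
    next
      case 2 then show ?thesis using assms(2) sig_R by metis
    qed
  qed
  have "\<tau> g = sig g" if "g \<in> HH" for g
    using that
  proof (induction rule: generate.induct)
    case one
    have "\<tau> \<one>\<^bsub>MM\<^esub> = \<one>\<^bsub>MM\<^esub>" using group_hom.hom_one[OF gT] .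
    moreover have "sig \<one>\<^bsub>MM\<^esub> = \<one>\<^bsub>MM\<^esub>" using group_hom.hom_one[OF gS] .
    ultimately show ?case using oneM by metis
  next
    case (incl h) then show ?case using gen by blast
  next
    case (inv h)
    have hH: "h \<in> HH" using generate.incl[OF inv] .
    have "\<tau> (inv\<^bsub>MM\<^esub> h) = inv\<^bsub>MM\<^esub> (\<tau> h)" using group_hom.hom_inv[OF gT] hH carM by metis
    moreover have "sig (inv\<^bsub>MM\<^esub> h) = inv\<^bsub>MM\<^esub> (sig h)" using group_hom.hom_inv[OF gS] hH carM by metis
    ultimately show ?case using invM[OF hH] gen[OF inv] by metis
  next
    case (eng h1 h2)
    have "\<tau> (h1 \<otimes>\<^bsub>MM\<^esub> h2) = \<tau> h1 \<otimes>\<^bsub>MM\<^esub> \<tau> h2" using group_hom.hom_mult[OF gT] eng(1,2) carM by metis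
    moreover have "sig (h1 \<otimes>\<^bsub>MM\<^esub> h2) = sig h1 \<otimes>\<^bsub>MM\<^esub> sig h2" using group_hom.hom_mult[OF gS] eng(1,2) carM by metis
    ultimately show ?case using eng(3,4) mulM by metis
  qed
  moreover have "\<tau> \<in> extensional HH" "sig \<in> extensional HH"
    using assms(1) sig_auto by (auto simp: auto_def Bij_def)
  ultimately show ?thesis by (intro extensionalityI[where A=HH]) auto
qed

lemma sig_comp: assumes "\<phi> \<in> HH" "companion Q m \<phi> c"
  shows "sig \<phi> = inv\<^bsub>MM\<^esub> (Rt Q m c) \<otimes>\<^bsub>MM\<^esub> \<phi>"
proof -
  have cQ: "c \<in> Q" and cp: "\<forall>x\<in>Q. \<forall>y\<in>Q. m (m c (\<phi> x)) (\<phi> y) = m c (\<phi> (m x y))"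
    using assms(2) by (auto simp: companion_def)
  have pB: "\<phi> \<in> Bij Q" using HB assms(1) .
  have LB: "compose Q (Lt Q m c) \<phi> \<in> Bij Q" using compose_Bij Lt_Bij[OF cQ] pB by blast
  have A1: "(compose Q (Lt Q m c) \<phi>, \<phi>, compose Q (Lt Q m c) \<phi>) \<in> atp"
    unfolding atp_def using LB pB cp by (auto simp: compose_def Lt_def)
  have A2: "(ivf (Lt Q m c), ivf (Rt Q m c), ivf (compose Q (Rt Q m c) (Lt Q m c))) \<in> atp"
    using atp_inv[OF atp_LR[OF cQ]] .
  have A3: "(compose Q (ivf (Lt Q m c)) (compose Q (Lt Q m c) \<phi>), compose Q (ivf (Rt Q m c)) \<phi>, 
     compose Q (ivf (compose Q (Rt Q m c) (Lt Q m c))) (compose Q (Lt Q m c) \<phi>)) \<in> atp"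
    using atp_comp[OF A2 A1] .
  have "compose Q (ivf (Lt Q m c)) (compose Q (Lt Q m c) \<phi>) = compose Q (compose Q (ivf (Lt Q m c)) (Lt Q m c)) \<phi>"
    using compose_assoc[of \<phi> Q Q "ivf (Lt Q m c)" "Lt Q m c"] pB Bij_imp_funcset Lt_Bij[OF cQ] by metis
  also have "\<dots> = \<phi>" using Bij_compose_restrict_eq[OF Lt_Bij[OF cQ]] pB
    by (simp add: ivf_def Bij_imp_extensional compose_Id)
  finally have "sig \<phi> = compose Q (ivf (Rt Q m c)) \<phi>" using A3 sig_eq[OF assms(1)] by metis
  then show ?thesis using invM[OF RH[OF cQ]] invG[OF Rt_Bij[OF cQ]] multG Bij_ivf Rt_Bij[OF cQ] pB by simp
qed

end

theorem lemma6p3: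
  assumes "moufang_loop Q m e"
    and "nucleus Q m = {e}"
  shows "\<exists>\<sigma>. (\<sigma> \<in> auto (Mlt Q m) \<and>
            (\<forall>x\<in>Q. \<sigma> (Lt Q m x) = Rt Q m x \<and>
                    \<sigma> (Rt Q m x) = inv\<^bsub>Mlt Q m\<^esub> (Rt Q m x \<otimes>\<^bsub>Mlt Q m\<^esub> Lt Q m x)))
          \<and> (\<forall>\<tau>. \<tau> \<in> auto (Mlt Q m) \<and>
                 (\<forall>x\<in>Q. \<tau> (Lt Q m x) = Rt Q m x \<and>
                    \<tau> (Rt Q m x) = inv\<^bsub>Mlt Q m\<^esub> (Rt Q m x \<otimes>\<^bsub>Mlt Q m\<^esub> Lt Q m x))
               \<longrightarrow> \<tau> = \<sigma>)
          \<and> (\<forall>g\<in>carrier (Mlt Q m). \<sigma> (\<sigma> (\<sigma> g)) = g)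
          \<and> (\<forall>\<phi>\<in>Inn Q m e. \<forall>c. companion Q m \<phi> c \<longrightarrow>
                 \<sigma> \<phi> = inv\<^bsub>Mlt Q m\<^esub> (Rt Q m c) \<otimes>\<^bsub>Mlt Q m\<^esub> \<phi>)"
proof -
  interpret moufn Q m e using assms by (simp add: moufn_def moufn_axioms_def mouf_def)
  have inn: "\<phi> \<in> HH" if "\<phi> \<in> Inn Q m e" for \<phi> using that by (simp add: Inn_def)
  show ?thesis
  proof (rule exI[where x=sig], intro conjI ballI allI impI)
    show "sig \<in> auto MM" by (rule sig_auto)
  next
    fix x assume "x \<in> Q" then show "sig (Lt Q m x) = Rt Q m x" by (rule sig_L)
  next
    fix x assume "x \<in> Q" then show "sig (Rt Q m x) = inv\<^bsub>MM\<^esub> (Rt Q m x \<otimes>\<^bsub>MM\<^esub> Lt Q m x)" by (rule sig_R)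
  next
    fix \<tau> assume "\<tau> \<in> auto MM \<and> (\<forall>x\<in>Q. \<tau> (Lt Q m x) = Rt Q m x \<and> \<tau> (Rt Q m x) = inv\<^bsub>MM\<^esub> (Rt Q m x \<otimes>\<^bsub>MM\<^esub> Lt Q m x))"
    then show "\<tau> = sig" using sig_unique by blast
  next
    fix g assume "g \<in> carrier MM" then show "sig (sig (sig g)) = g" using sig3 by simp
  next
    fix \<phi> c assume "\<phi> \<in> Inn Q m e" "companion Q m \<phi> c"
    then show "sig \<phi> = inv\<^bsub>MM\<^esub> (Rt Q m c) \<otimes>\<^bsub>MM\<^esub> \<phi>" using sig_comp inn by blast
  qed
qed

end
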